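(* Let $(G,\mathcal{T},(A^\circ,B^\circ),k)$ be a maximal Terminal Separation instance. If $A$ is a terminal-free $A^\circ$-extension with $d(A)-d(A^\circ)=1$, then there exists an integral terminal separation $(A^\ast,B^\ast)$ extending $(A^\circ,B^\circ)$ that has minimum cost among all integral terminal separations extending $(A^\circ,B^\circ)$, such that $A\setminus A^\circ\subseteq A^\ast$ or $A\setminus A^\circ\subseteq B^\ast$.
   Context: Graphs may have multiple edges but no loops; $d(A)$ is the number of edges with exactly one endpoint in $A$. For a family $\mathcal{T}$ of pairwise disjoint vertex pairs (terminals are their vertices), a terminal separation is a pair $(A,B)$ of disjoint vertex sets such that each pair in $\mathcal{T}$ either has one vertex in $A$ and one in $B$ or is disjoint from $A\cup B$; it is integral if $A\cup B=V(G)$; $(A',B')$ extends $(A,B)$ if $A\subseteq A'$, $B\subseteq B'$; cost $c(A,B)=(d(A)+d(B))/2$; $(A,B)$ is maximal if every other terminal separation extending it has strictly larger cost. A Terminal Separation instance $(G,\mathcal{T},(A^\circ,B^\circ),k)$ has every terminal of degree at most one and $(A^\circ,B^\circ)$ a terminal separation; it is maximal if $(A^\circ,B^\circ)$ is maximal. A set $A$ is an $A^\circ$-extension if $A^\circ\subseteq A\subseteq V(G)\setminus B^\circ$; it is terminal-free if $A\setminus A^\circ$ contains no terminal. *)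

theory Defs
  imports Complex_Main
begin

text \<open>A finite multigraph without loops: vertex set V, edge set E (edges are
  distinct objects, so parallel edges are allowed), and an endpoint map.\<close>
definition multigraph :: "'v set \<Rightarrow> 'e set \<Rightarrow> ('e \<Rightarrow> 'v \<times> 'v) \<Rightarrow> bool" where
  "multigraph V E ends \<longleftrightarrow> finite V \<and> finite E \<and>
     (\<forall>e\<in>E. fst (ends e) \<in> V \<and> snd (ends e) \<in> V \<and> fst (ends e) \<noteq> snd (ends e))"

definition dcut :: "'e set \<Rightarrow> ('e \<Rightarrow> 'v \<times> 'v) \<Rightarrow> 'v set \<Rightarrow> nat" where
  "dcut E ends A = card {e\<in>E. (fst (ends e) \<in> A) \<noteq> (snd (ends e) \<in> A)}"

definition degree :: "'e set \<Rightarrow> ('e \<Rightarrow> 'v \<times> 'v) \<Rightarrow> 'v \<Rightarrow> nat" where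
  "degree E ends v = card {e\<in>E. fst (ends e) = v \<or> snd (ends e) = v}"

definition pair_family :: "'v set \<Rightarrow> 'v set set \<Rightarrow> bool" where
  "pair_family V T \<longleftrightarrow> (\<forall>p\<in>T. p \<subseteq> V \<and> card p = 2) \<and>
     (\<forall>p\<in>T. \<forall>q\<in>T. p \<noteq> q \<longrightarrow> p \<inter> q = {})"

definition terminals :: "'v set set \<Rightarrow> 'v set" where
  "terminals T = \<Union>T"

definition term_sep :: "'v set \<Rightarrow> 'v set set \<Rightarrow> 'v set \<Rightarrow> 'v set \<Rightarrow> bool" where
  "term_sep V T A B \<longleftrightarrow> A \<subseteq> V \<and> B \<subseteq> V \<and> A \<inter> B = {} \<and>
     (\<forall>p\<in>T. (\<exists>a b. p = {a, b} \<and> a \<in> A \<and> b \<in> B) \<or> p \<inter> (A \<union> B) = {})"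

definition integral_sep :: "'v set \<Rightarrow> 'v set set \<Rightarrow> 'v set \<Rightarrow> 'v set \<Rightarrow> bool" where
  "integral_sep V T A B \<longleftrightarrow> term_sep V T A B \<and> A \<union> B = V"

definition extends :: "'v set \<Rightarrow> 'v set \<Rightarrow> 'v set \<Rightarrow> 'v set \<Rightarrow> bool" where
  "extends A' B' A B \<longleftrightarrow> A \<subseteq> A' \<and> B \<subseteq> B'"

definition sep_cost :: "'e set \<Rightarrow> ('e \<Rightarrow> 'v \<times> 'v) \<Rightarrow> 'v set \<Rightarrow> 'v set \<Rightarrow> real" where
  "sep_cost E ends A B = (real (dcut E ends A) + real (dcut E ends B)) / 2"

definition maximal_sep ::
  "'v set \<Rightarrow> 'e set \<Rightarrow> ('e \<Rightarrow> 'v \<times> 'v) \<Rightarrow> 'v set set \<Rightarrow> 'v set \<Rightarrow> 'v set \<Rightarrow> bool" where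
  "maximal_sep V E ends T A B \<longleftrightarrow> term_sep V T A B \<and>
     (\<forall>A' B'. term_sep V T A' B' \<and> extends A' B' A B \<and> (A', B') \<noteq> (A, B)
        \<longrightarrow> sep_cost E ends A' B' > sep_cost E ends A B)"

definition TS_instance ::
  "'v set \<Rightarrow> 'e set \<Rightarrow> ('e \<Rightarrow> 'v \<times> 'v) \<Rightarrow> 'v set set \<Rightarrow> 'v set \<Rightarrow> 'v set \<Rightarrow> nat \<Rightarrow> bool" where
  "TS_instance V E ends T A0 B0 k \<longleftrightarrow> multigraph V E ends \<and> pair_family V T \<and>
     (\<forall>t\<in>terminals T. degree E ends t \<le> 1) \<and> term_sep V T A0 B0"

definition maximal_TS_instance ::
  "'v set \<Rightarrow> 'e set \<Rightarrow> ('e \<Rightarrow> 'v \<times> 'v) \<Rightarrow> 'v set set \<Rightarrow> 'v set \<Rightarrow> 'v set \<Rightarrow> nat \<Rightarrow> bool" where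
  "maximal_TS_instance V E ends T A0 B0 k \<longleftrightarrow>
     TS_instance V E ends T A0 B0 k \<and> maximal_sep V E ends T A0 B0"

definition A0_extension :: "'v set \<Rightarrow> 'v set \<Rightarrow> 'v set \<Rightarrow> 'v set \<Rightarrow> bool" where
  "A0_extension V A0 B0 A \<longleftrightarrow> A0 \<subseteq> A \<and> A \<subseteq> V - B0"

definition terminal_free :: "'v set set \<Rightarrow> 'v set \<Rightarrow> 'v set \<Rightarrow> bool" where
  "terminal_free T A0 A \<longleftrightarrow> (A - A0) \<inter> terminals T = {}"

end

theory Submission
  imports Defs
begin

lemma dcut_sum: "finite E \<Longrightarrow> dcut E ends S = (\<Sum>e\<in>E. if (fst (ends e) \<in> S) \<noteq> (snd (ends e) \<in> S) then 1 else 0)"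
  unfolding dcut_def by (simp add: sum.If_cases Int_def)

lemma dcut_submod:
  assumes "finite E"
  shows "dcut E ends (S \<union> R) + dcut E ends (S \<inter> R) \<le> dcut E ends S + dcut E ends R"
proof -
  have "dcut E ends (S \<union> R) + dcut E ends (S \<inter> R) =
     (\<Sum>e\<in>E. (if (fst (ends e) \<in> S \<union> R) \<noteq> (snd (ends e) \<in> S \<union> R) then 1 else 0)
         + (if (fst (ends e) \<in> S \<inter> R) \<noteq> (snd (ends e) \<in> S \<inter> R) then 1 else 0))"
    using assms by (simp add: dcut_sum sum.distrib)
  also have "\<dots> \<le> (\<Sum>e\<in>E. (if (fst (ends e) \<in> S) \<noteq> (snd (ends e) \<in> S) then 1 else 0)
         + (if (fst (ends e) \<in> R) \<noteq> (snd (ends e) \<in> R) then 1 else 0))"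
    by (rule sum_mono) auto
  also have "\<dots> = dcut E ends S + dcut E ends R"
    using assms by (simp add: dcut_sum sum.distrib)
  finally show ?thesis .
qed

lemma dcut_compl:
  assumes "multigraph V E ends"
  shows "dcut E ends (V - S) = dcut E ends S"
proof -
  have "{e\<in>E. (fst (ends e) \<in> V - S) \<noteq> (snd (ends e) \<in> V - S)} = {e\<in>E. (fst (ends e) \<in> S) \<noteq> (snd (ends e) \<in> S)}"
    using assms unfolding multigraph_def by auto
  thus ?thesis unfolding dcut_def by simp
qed

lemma cost_integral:
  assumes "multigraph V E ends" "integral_sep V T A B"
  shows "sep_cost E ends A B = real (dcut E ends A)"
proof -
  have "B = V - A" using assms(2) unfolding integral_sep_def term_sep_def by auto
  thus ?thesis using dcut_compl[OF assms(1)] unfolding sep_cost_def by simp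
qed

lemma term_sep_pair:
  assumes "term_sep V T A B" "p \<in> T" "p \<inter> (A \<union> B) \<noteq> {}"
  shows "\<exists>a b. p = {a, b} \<and> a \<in> A \<and> b \<in> B"
proof -
  have h: "\<forall>p\<in>T. (\<exists>a b. p = {a, b} \<and> a \<in> A \<and> b \<in> B) \<or> p \<inter> (A \<union> B) = {}"
    using assms(1) unfolding term_sep_def by (elim conjE)
  from bspec[OF h assms(2)] assms(3) show ?thesis by (elim disjE) auto
qed

lemma exists_integral:
  assumes "pair_family V T" "term_sep V T A0 B0"
  shows "\<exists>As Bs. integral_sep V T As Bs \<and> extends As Bs A0 B0"
proof -
  define b where "b p = (SOME x. x \<in> p)" for p :: "'a set"
  define U where "U = {p\<in>T. p \<inter> (A0 \<union> B0) = {}}"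
  define Bs where "Bs = B0 \<union> b ` U"
  define As where "As = V - Bs"
  have bp: "b p \<in> p" if "p \<in> T" for p
  proof -
    have "card p = 2" using assms(1) that unfolding pair_family_def by auto
    hence "p \<noteq> {}" by auto
    thus ?thesis unfolding b_def by (simp add: some_in_eq)
  qed
  have BsV: "Bs \<subseteq> V"
  proof -
    have "B0 \<subseteq> V" using assms(2) unfolding term_sep_def by auto
    moreover have "b ` U \<subseteq> V"
    proof
      fix y assume "y \<in> b ` U"
      then obtain p where "p \<in> U" "y = b p" by auto
      hence "p \<in> T" "y \<in> p" using bp unfolding U_def by auto
      thus "y \<in> V" using assms(1) unfolding pair_family_def by auto
    qed
    ultimately show ?thesis unfolding Bs_def by auto
  qed
  have A0As: "A0 \<subseteq> As"
  proof
    fix x assume x: "x \<in> A0"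
    have "x \<in> V" using x assms(2) unfolding term_sep_def by auto
    moreover have "x \<notin> B0" using x assms(2) unfolding term_sep_def by auto
    moreover have "x \<notin> b ` U"
    proof
      assume "x \<in> b ` U"
      then obtain p where "p \<in> U" "x = b p" by auto
      hence "p \<in> T" "x \<in> p" "p \<inter> (A0 \<union> B0) = {}" using bp unfolding U_def by auto
      thus False using x by auto
    qed
    ultimately show "x \<in> As" unfolding As_def Bs_def by auto
  qed
  have "term_sep V T As Bs"
    unfolding term_sep_def
  proof (intro conjI ballI)
    show "As \<subseteq> V" "Bs \<subseteq> V" "As \<inter> Bs = {}" using BsV unfolding As_def by auto
  next
    fix p assume p: "p \<in> T"
    show "(\<exists>a b. p = {a, b} \<and> a \<in> As \<and> b \<in> Bs) \<or> p \<inter> (As \<union> Bs) = {}"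
    proof (cases "p \<inter> (A0 \<union> B0) = {}")
      case False
      then obtain a c where ac: "p = {a, c}" "a \<in> A0" "c \<in> B0" using term_sep_pair[OF assms(2) p] by blast
      have "a \<in> As" "c \<in> Bs" using ac A0As unfolding Bs_def by auto
      thus ?thesis using ac(1) by (intro disjI1 exI[of _ a] exI[of _ c]) auto
    next
      case True
      hence pU: "p \<in> U" unfolding U_def using p by auto
      have "card p = 2" "p \<subseteq> V" using assms(1) p unfolding pair_family_def by auto
      then obtain a c where ac: "p = {a, c}" "a \<noteq> c" by (meson card_2_iff)
      define a' where "a' = (if b p = a then c else a)"
      have peq: "p = {a', b p}" and pn: "a' \<noteq> b p" using bp[OF p] ac unfolding a'_def by auto
      have pa: "a' \<in> p" using ac unfolding a'_def by auto
      have "a' \<notin> B0" using True pa by auto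
      moreover have "a' \<notin> b ` U"
      proof
        assume "a' \<in> b ` U"
        then obtain q where q: "q \<in> U" "a' = b q" by auto
        have "q \<in> T" using q U_def by auto
        hence "a' \<in> q" using bp q by auto
        moreover note pa
        ultimately have "p \<inter> q \<noteq> {}" by auto
        moreover have "\<forall>p\<in>T. \<forall>q\<in>T. p \<noteq> q \<longrightarrow> p \<inter> q = {}" using assms(1) unfolding pair_family_def by auto
        ultimately have "p = q" using p \<open>q \<in> T\<close> by auto
        thus False using pn q by simp
      qed
      moreover have "a' \<in> V" using pa \<open>p \<subseteq> V\<close> by auto
      ultimately have "a' \<in> As" unfolding As_def Bs_def by auto
      moreover have "b p \<in> Bs" using pU unfolding Bs_def by auto
      ultimately have "p = {a', b p} \<and> a' \<in> As \<and> b p \<in> Bs" using peq by (intro conjI)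
      thus ?thesis by (intro disjI1 exI[of _ a'] exI[of _ "b p"])
    qed
  qed
  moreover have "As \<union> Bs = V" using BsV unfolding As_def by auto
  moreover have "B0 \<subseteq> Bs" unfolding Bs_def by auto
  ultimately show ?thesis using A0As unfolding integral_sep_def extends_def by blast
qed

theorem lemma4p3:
  fixes V :: "'v set" and E :: "'e set" and ends :: "'e \<Rightarrow> 'v \<times> 'v"
    and T :: "'v set set" and A0 B0 A :: "'v set" and k :: nat
  assumes "maximal_TS_instance V E ends T A0 B0 k"
    and "A0_extension V A0 B0 A"
    and "terminal_free T A0 A"
    and "int (dcut E ends A) - int (dcut E ends A0) = 1"
  shows "\<exists>As Bs. integral_sep V T As Bs \<and> extends As Bs A0 B0 \<and>
     (\<forall>A' B'. integral_sep V T A' B' \<and> extends A' B' A0 B0 \<longrightarrow>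
        sep_cost E ends As Bs \<le> sep_cost E ends A' B') \<and>
     (A - A0 \<subseteq> As \<or> A - A0 \<subseteq> Bs)"
proof -
  have mg: "multigraph V E ends" and pf: "pair_family V T" and ts0: "term_sep V T A0 B0"
    and maxs: "maximal_sep V E ends T A0 B0"
    using assms(1) unfolding maximal_TS_instance_def TS_instance_def by auto
  have finE: "finite E" and finV: "finite V" using mg unfolding multigraph_def by auto
  have A0A: "A0 \<subseteq> A" and AV: "A \<subseteq> V - B0" using assms(2) unfolding A0_extension_def by auto
  have tf: "(A - A0) \<inter> terminals T = {}" using assms(3) unfolding terminal_free_def by auto
  define S where "S = {(A', B'). integral_sep V T A' B' \<and> extends A' B' A0 B0}"
  have finS: "finite S"
  proof -
    have "S \<subseteq> Pow V \<times> Pow V" unfolding S_def integral_sep_def term_sep_def by auto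
    thus ?thesis using finV by (meson finite_Pow_iff finite_SigmaI finite_subset)
  qed
  have neS: "S \<noteq> {}" using exists_integral[OF pf ts0] unfolding S_def by auto
  define f where "f = (\<lambda>(X, Y). sep_cost E ends X Y)"
  have "Min (f ` S) \<in> f ` S" using finS neS by simp
  then obtain As Bs where sel: "(As, Bs) \<in> S" "f (As, Bs) = Min (f ` S)" by auto
  have opt: "\<forall>A' B'. integral_sep V T A' B' \<and> extends A' B' A0 B0 \<longrightarrow>
        sep_cost E ends As Bs \<le> sep_cost E ends A' B'"
  proof (intro allI impI)
    fix A' B' assume "integral_sep V T A' B' \<and> extends A' B' A0 B0"
    hence "(A', B') \<in> S" unfolding S_def by auto
    hence "Min (f ` S) \<le> f (A', B')" using finS by simp
    thus "sep_cost E ends As Bs \<le> sep_cost E ends A' B'" using sel unfolding f_def by simp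
  qed
  have isAB: "integral_sep V T As Bs" and exAB: "extends As Bs A0 B0" using sel unfolding S_def by auto
  show ?thesis
  proof (cases "A - A0 \<subseteq> Bs")
    case True thus ?thesis using isAB exAB opt by blast
  next
    case False
    then obtain x where x: "x \<in> A" "x \<notin> A0" "x \<notin> Bs" by auto
    have tsAB: "term_sep V T As Bs" and unAB: "As \<union> Bs = V" using isAB unfolding integral_sep_def by auto
    have A0As: "A0 \<subseteq> As" and B0Bs: "B0 \<subseteq> Bs" using exAB unfolding extends_def by auto
    have xAs: "x \<in> As" using x unAB AV by auto
    have ts1: "term_sep V T (A \<inter> As) B0"
      unfolding term_sep_def
    proof (intro conjI ballI)
      show "A \<inter> As \<subseteq> V" "B0 \<subseteq> V" "A \<inter> As \<inter> B0 = {}" using AV ts0 unfolding term_sep_def by auto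
    next
      fix p assume p: "p \<in> T"
      show "(\<exists>a b. p = {a, b} \<and> a \<in> A \<inter> As \<and> b \<in> B0) \<or> p \<inter> (A \<inter> As \<union> B0) = {}"
      proof (cases "p \<inter> (A0 \<union> B0) = {}")
        case False
        then obtain a c where ac: "p = {a, c}" "a \<in> A0" "c \<in> B0" using term_sep_pair[OF ts0 p] by blast
        have "a \<in> A \<inter> As" using ac A0A A0As by auto
        thus ?thesis using ac(1,3) by (intro disjI1 exI[of _ a] exI[of _ c]) auto
      next
        case True
        have "p \<subseteq> terminals T" using p unfolding terminals_def by auto
        hence "p \<inter> (A \<inter> As) = {}" using tf True by blast
        thus ?thesis using True by blast
      qed
    qed
    have "(A \<inter> As, B0) \<noteq> (A0, B0)" using x xAs by auto
    moreover have "extends (A \<inter> As) B0 A0 B0" using A0A A0As unfolding extends_def by auto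
    ultimately have "sep_cost E ends (A \<inter> As) B0 > sep_cost E ends A0 B0"
      using maxs ts1 unfolding maximal_sep_def by (meson)
    hence d1: "dcut E ends (A \<inter> As) > dcut E ends A0" unfolding sep_cost_def by simp
    have d2: "dcut E ends (A \<union> As) + dcut E ends (A \<inter> As) \<le> dcut E ends A + dcut E ends As"
      using dcut_submod[OF finE] .
    have d3: "dcut E ends (A \<union> As) \<le> dcut E ends As" using d1 d2 assms(4) by linarith
    define As' where "As' = A \<union> As"
    define Bs' where "Bs' = Bs - A"
    have ts2: "term_sep V T As' Bs'"
      unfolding term_sep_def
    proof (intro conjI ballI)
      show "As' \<subseteq> V" "Bs' \<subseteq> V" "As' \<inter> Bs' = {}" using AV tsAB unfolding term_sep_def As'_def Bs'_def by auto
    next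
      fix p assume p: "p \<in> T"
      have pV: "p \<subseteq> V" using pf p unfolding pair_family_def by auto
      have pt: "p \<subseteq> terminals T" using p unfolding terminals_def by auto
      show "(\<exists>a b. p = {a, b} \<and> a \<in> As' \<and> b \<in> Bs') \<or> p \<inter> (As' \<union> Bs') = {}"
      proof (cases "p \<inter> (As \<union> Bs) = {}")
        case True
        hence "p = {}" using pV unAB by auto
        thus ?thesis by auto
      next
        case False
        then obtain a c where ac: "p = {a, c}" "a \<in> As" "c \<in> Bs" using term_sep_pair[OF tsAB p] by blast
        have "As \<inter> Bs = {}" using tsAB unfolding term_sep_def by auto
        hence "c \<notin> A0" using ac A0As by auto
        moreover have "c \<in> terminals T" using ac pt by auto
        ultimately have "c \<notin> A" using tf by auto
        hence "a \<in> As'" "c \<in> Bs'" using ac unfolding As'_def Bs'_def by auto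
        thus ?thesis using ac(1) by (intro disjI1 exI[of _ a] exI[of _ c]) auto
      qed
    qed
    have is2: "integral_sep V T As' Bs'" using ts2 unAB AV unfolding integral_sep_def As'_def Bs'_def by auto
    have ex2: "extends As' Bs' A0 B0" using A0As B0Bs AV unfolding extends_def As'_def Bs'_def by auto
    have "sep_cost E ends As' Bs' \<le> sep_cost E ends As Bs"
      using cost_integral[OF mg is2] cost_integral[OF mg isAB] d3 unfolding As'_def by simp
    hence opt2: "\<forall>A' B'. integral_sep V T A' B' \<and> extends A' B' A0 B0 \<longrightarrow>
        sep_cost E ends As' Bs' \<le> sep_cost E ends A' B'" using opt by fastforce
    show ?thesis using is2 ex2 opt2 unfolding As'_def by blast
  qed
qed

end
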